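(* Let $\Bbbk$ be a field with $\mathrm{char}(\Bbbk)\ne2$, $n\ge2$, $\mathbb{H}_{2^n}$ the Nichols Hopf algebra and $A$ a unital associative $\Bbbk$-algebra. Let $\cdot:\mathbb{H}_{2^n}\otimes A\to A$ be a partial action with $g\cdot1_A=0$ and $x_i\cdot1_A\in Z(A)$ for all $i\in\{1,\dots,n-1\}$. Then for all $a\in A$ and $i\in\{1,\dots,n-1\}$, $$gx_i\cdot a=x_i\cdot a=(x_i\cdot1_A)a,$$ and $gx_{i_1}x_{i_2}\cdots x_{i_s}\cdot a=x_{i_1}x_{i_2}\cdots x_{i_s}\cdot a=0$ for all $s\ge2$ and $i_1,\dots,i_s\in\{1,\dots,n-1\}$.
   Context: $\mathbb{H}_{2^n}$ is the Hopf algebra generated by $g,x_1,\dots,x_{n-1}$ with relations $g^2=1$, $x_i^2=0$, $x_ig=-gx_i$, $x_ix_j=-x_jx_i$, $g$ group-like, $\Delta(x_i)=x_i\otimes1+g\otimes x_i$, $\varepsilon(x_i)=0$. $Z(A)$ is the center of $A$. A partial action of a bialgebra $H$ on $A$ is a linear map $\cdot:H\otimes A\to A$ with $1_H\cdot a=a$, $h\cdot(ab)=(h_1\cdot a)(h_2\cdot b)$, $h\cdot(k\cdot a)=(h_1\cdot1_A)(h_2k\cdot a)$. *)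

theory Defs
  imports Main "HOL.Modules"
begin

text \<open>Concrete model of the Nichols Hopf algebra H_{2^n} over a field 'k.
  Basis: g^e x_S with e :: bool (g^0 or g^1) and S a subset of {1..n-1};
  x_S = x_{s1} x_{s2} ... x_{sk} with s1 < s2 < ... < sk.\<close>

type_synonym 'k hel = "bool \<times> nat set \<Rightarrow> 'k"

definition hbasis :: "nat \<Rightarrow> (bool \<times> nat set) set" where
  "hbasis n = UNIV \<times> Pow {1..<n}"

definition Hset :: "nat \<Rightarrow> ('k::field) hel set" where
  "Hset n = {h. \<forall>b. b \<notin> hbasis n \<longrightarrow> h b = 0}"

definition hb :: "bool \<times> nat set \<Rightarrow> ('k::field) hel" where
  "hb b = (\<lambda>c. if c = b then 1 else 0)"

definition hone :: "('k::field) hel" where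
  "hone = hb (False, {})"

definition hg :: "('k::field) hel" where
  "hg = hb (True, {})"

definition hx :: "nat \<Rightarrow> ('k::field) hel" where
  "hx i = hb (False, {i})"

definition ninv :: "nat set \<Rightarrow> nat set \<Rightarrow> nat" where
  "ninv S T = card {(s, t). s \<in> S \<and> t \<in> T \<and> t < s}"

text \<open>(g^e x_S)(g^f x_T) = (-1)^(f|S|) g^(e+f) x_S x_T, and
  x_S x_T = 0 if S, T meet, else (-1)^(ninv S T) x_(S \<union> T).\<close>
definition hmul_basis :: "bool \<times> nat set \<Rightarrow> bool \<times> nat set \<Rightarrow> ('k::field) hel" where
  "hmul_basis b c = (case b of (e, S) \<Rightarrow> case c of (f, T) \<Rightarrow>
     if S \<inter> T = {} then
       (\<lambda>d. (- 1) ^ (card S * (if f then 1 else 0) + ninv S T) * hb (e \<noteq> f, S \<union> T) d)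
     else (\<lambda>d. 0))"

definition hmul :: "nat \<Rightarrow> ('k::field) hel \<Rightarrow> 'k hel \<Rightarrow> 'k hel" where
  "hmul n h k = (\<lambda>d. \<Sum>b\<in>hbasis n. \<Sum>c\<in>hbasis n. h b * k c * hmul_basis b c d)"

text \<open>Comultiplication on basis elements:
  Delta(g^e x_S) = sum over T \<subseteq> S of
    (-1)^(N(T, S-T)) g^(e + |S-T|) x_T \<otimes> g^e x_(S-T),
  where N(T,U) = #{(t,u) in T x U. t < u}.  This is the unique algebra map
  with Delta(g) = g\<otimes>g, Delta(x_i) = x_i\<otimes>1 + g\<otimes>x_i.
  dcoef b p q is the coefficient of (basis p) \<otimes> (basis q) in Delta(basis b).\<close>
definition dcoef :: "bool \<times> nat set \<Rightarrow> bool \<times> nat set \<Rightarrow> bool \<times> nat set \<Rightarrow> 'k::field" where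
  "dcoef b p q = (case b of (e, S) \<Rightarrow> case p of (e1, T) \<Rightarrow> case q of (e2, U) \<Rightarrow>
     if T \<subseteq> S \<and> U = S - T \<and> e1 = (e \<noteq> odd (card U)) \<and> e2 = e
     then (- 1) ^ card {(t, u). t \<in> T \<and> u \<in> U \<and> t < u} else 0)"

definition hcomul :: "nat \<Rightarrow> ('k::field) hel \<Rightarrow> bool \<times> nat set \<Rightarrow> bool \<times> nat set \<Rightarrow> 'k" where
  "hcomul n h p q = (\<Sum>b\<in>hbasis n. h b * dcoef b p q)"

definition xprod :: "nat \<Rightarrow> nat list \<Rightarrow> ('k::field) hel" where
  "xprod n is = foldr (\<lambda>i h. hmul n (hx i) h) is hone"

definition k_algebra :: "('k::field \<Rightarrow> 'a::ring_1 \<Rightarrow> 'a) \<Rightarrow> bool" where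
  "k_algebra smult \<longleftrightarrow> module smult \<and>
     (\<forall>c a b. smult c (a * b) = smult c a * b \<and> smult c (a * b) = a * smult c b)"

text \<open>A partial action of H_{2^n} on A: a linear map H \<otimes> A \<rightarrow> A
  (i.e. bilinear act on Hset n \<times> A) with the three axioms; Sweedler sums are
  expanded in the basis.\<close>
definition partial_action ::
  "nat \<Rightarrow> ('k::field \<Rightarrow> 'a::ring_1 \<Rightarrow> 'a) \<Rightarrow> ('k hel \<Rightarrow> 'a \<Rightarrow> 'a) \<Rightarrow> bool" where
  "partial_action n smult act \<longleftrightarrow>
     (\<forall>h\<in>Hset n. \<forall>h'\<in>Hset n. \<forall>a. act (\<lambda>d. h d + h' d) a = act h a + act h' a) \<and>
     (\<forall>h\<in>Hset n. \<forall>c a. act (\<lambda>d. c * h d) a = smult c (act h a)) \<and>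
     (\<forall>h\<in>Hset n. \<forall>a b. act h (a + b) = act h a + act h b) \<and>
     (\<forall>h\<in>Hset n. \<forall>c a. act h (smult c a) = smult c (act h a)) \<and>
     (\<forall>a. act hone a = a) \<and>
     (\<forall>h\<in>Hset n. \<forall>a b. act h (a * b) =
        (\<Sum>p\<in>hbasis n. \<Sum>q\<in>hbasis n. smult (hcomul n h p q) (act (hb p) a * act (hb q) b))) \<and>
     (\<forall>h\<in>Hset n. \<forall>k\<in>Hset n. \<forall>a. act h (act k a) =
        (\<Sum>p\<in>hbasis n. \<Sum>q\<in>hbasis n.
           smult (hcomul n h p q) (act (hb p) 1 * act (hmul n (hb q) k) a)))"

end

theory Submission
  imports Defs
begin

lemma fin_hbasis: "finite (hbasis n)"
  unfolding hbasis_def by simp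

lemma hb_Hset: "b \<in> hbasis n \<Longrightarrow> (hb b :: 'k::field hel) \<in> Hset n"
  unfolding Hset_def hb_def by auto

lemma hmul_Hset: "hmul n h k \<in> Hset n"
  unfolding Hset_def
proof (intro CollectI allI impI)
  fix d assume d: "d \<notin> hbasis n"
  have "hmul_basis b c d = (0::'a)" if "b \<in> hbasis n" "c \<in> hbasis n" for b c
  proof -
    obtain e S f T where bc: "b = (e,S)" "c = (f,T)" by (cases b, cases c) auto
    have "(e \<noteq> f, S \<union> T) \<in> hbasis n" using that bc unfolding hbasis_def by auto
    then have "d \<noteq> (e \<noteq> f, S \<union> T)" using d by auto
    then show ?thesis unfolding hmul_basis_def bc hb_def by auto
  qed
  then show "hmul n h k d = 0" unfolding hmul_def by simp
qed

lemma hmul_left: "b0 \<in> hbasis n \<Longrightarrow> hmul n (hb b0) k d = (\<Sum>c\<in>hbasis n. k c * hmul_basis b0 c d)"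
proof -
  assume b0: "b0 \<in> hbasis n"
  have "hmul n (hb b0) k d = (\<Sum>b\<in>hbasis n. if b = b0 then (\<Sum>c\<in>hbasis n. k c * hmul_basis b c d) else 0)"
    unfolding hmul_def hb_def by (rule sum.cong) auto
  also have "\<dots> = (\<Sum>c\<in>hbasis n. k c * hmul_basis b0 c d)"
    using b0 by (simp add: fin_hbasis)
  finally show ?thesis .
qed

definition sgn1 :: "bool \<Rightarrow> nat \<Rightarrow> nat set \<Rightarrow> 'k::field" where
  "sgn1 e i S = (- 1) ^ ((if e then 1 else 0) + ninv {i} (S - {i}))"

lemma hmul_g: "hmul n hg k d = (if d \<in> hbasis n then k (\<not> fst d, snd d) else 0)"
proof -
  have b: "(True, {}) \<in> hbasis n" unfolding hbasis_def by auto
  have "hmul n hg k d = (\<Sum>c\<in>hbasis n. if c = (\<not> fst d, snd d) then k c else 0)"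
    unfolding hg_def hmul_left[OF b]
  proof (rule sum.cong)
    fix c assume "c \<in> hbasis n"
    obtain f T e S where "c = (f,T)" "d = (e,S)" by (cases c, cases d) auto
    then show "k c * hmul_basis (True, {}) c d = (if c = (\<not> fst d, snd d) then k c else 0)"
      unfolding hmul_basis_def hb_def ninv_def by auto
  qed simp
  also have "\<dots> = (if (\<not> fst d, snd d) \<in> hbasis n then k (\<not> fst d, snd d) else 0)"
    by (simp add: fin_hbasis)
  also have "((\<not> fst d, snd d) \<in> hbasis n) = (d \<in> hbasis n)" by (cases d) (simp add: hbasis_def)
  finally show ?thesis .
qed

lemma hmul_x: assumes i: "i \<in> {1..<n}"
  shows "hmul n (hx i) k d = (if d \<in> hbasis n \<and> i \<in> snd d then sgn1 (fst d) i (snd d) * k (fst d, snd d - {i}) else 0)"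
proof -
  have b: "(False, {i}) \<in> hbasis n" using i unfolding hbasis_def by auto
  have "hmul n (hx i) k d = (\<Sum>c\<in>hbasis n. if i \<in> snd d then (if c = (fst d, snd d - {i}) then sgn1 (fst d) i (snd d) * k c else 0) else 0)"
    unfolding hx_def hmul_left[OF b]
  proof (rule sum.cong)
    fix c assume "c \<in> hbasis n"
    obtain f T e S where c: "c = (f,T)" and d: "d = (e,S)" by (cases c, cases d) auto
    show "k c * hmul_basis (False, {i}) c d = (if i \<in> snd d then (if c = (fst d, snd d - {i}) then sgn1 (fst d) i (snd d) * k c else 0) else 0)"
    proof (cases "i \<in> T")
      case True then show ?thesis unfolding c d hmul_basis_def by auto
    next
      case False
      then have "(S = insert i T) = (i \<in> S \<and> T = S - {i})" by auto
      with False show ?thesis unfolding c d hmul_basis_def hb_def sgn1_def by auto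
    qed
  qed simp
  also have "\<dots> = (if i \<in> snd d then (if (fst d, snd d - {i}) \<in> hbasis n then sgn1 (fst d) i (snd d) * k (fst d, snd d - {i}) else 0) else 0)"
    by (cases "i \<in> snd d") (simp_all add: fin_hbasis)
  also have "\<dots> = (if d \<in> hbasis n \<and> i \<in> snd d then sgn1 (fst d) i (snd d) * k (fst d, snd d - {i}) else 0)"
    using i by (cases d) (auto simp add: hbasis_def)
  finally show ?thesis .
qed

lemma hmul_gx: assumes i: "i \<in> {1..<n}"
  shows "hmul n (hb (True, {i})) k d = (if d \<in> hbasis n \<and> i \<in> snd d then sgn1 (\<not> fst d) i (snd d) * k (\<not> fst d, snd d - {i}) else 0)"
proof -
  have b: "(True, {i}) \<in> hbasis n" using i unfolding hbasis_def by auto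
  have "hmul n (hb (True, {i})) k d = (\<Sum>c\<in>hbasis n. if i \<in> snd d then (if c = (\<not> fst d, snd d - {i}) then sgn1 (\<not> fst d) i (snd d) * k c else 0) else 0)"
    unfolding hmul_left[OF b]
  proof (rule sum.cong)
    fix c assume "c \<in> hbasis n"
    obtain f T e S where c: "c = (f,T)" and d: "d = (e,S)" by (cases c, cases d) auto
    show "k c * hmul_basis (True, {i}) c d = (if i \<in> snd d then (if c = (\<not> fst d, snd d - {i}) then sgn1 (\<not> fst d) i (snd d) * k c else 0) else 0)"
    proof (cases "i \<in> T")
      case True then show ?thesis unfolding c d hmul_basis_def by auto
    next
      case False
      then have "(S = insert i T) = (i \<in> S \<and> T = S - {i})" by auto
      with False show ?thesis unfolding c d hmul_basis_def hb_def sgn1_def by auto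
    qed
  qed simp
  also have "\<dots> = (if i \<in> snd d then (if (\<not> fst d, snd d - {i}) \<in> hbasis n then sgn1 (\<not> fst d) i (snd d) * k (\<not> fst d, snd d - {i}) else 0) else 0)"
    by (cases "i \<in> snd d") (simp_all add: fin_hbasis)
  also have "\<dots> = (if d \<in> hbasis n \<and> i \<in> snd d then sgn1 (\<not> fst d) i (snd d) * k (\<not> fst d, snd d - {i}) else 0)"
    using i by (cases d) (auto simp add: hbasis_def)
  finally show ?thesis .
qed

lemma Hset_out: "k \<in> Hset n \<Longrightarrow> d \<notin> hbasis n \<Longrightarrow> k d = 0"
  unfolding Hset_def by blast

lemma hbasis_neg: "((\<not> e, S) \<in> hbasis n) = ((e, S) \<in> hbasis n)"
  unfolding hbasis_def by auto

lemma hbasis_minus: "(e, S) \<in> hbasis n \<Longrightarrow> (e', S - X) \<in> hbasis n"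
  unfolding hbasis_def by auto

lemma sgn1_neg: "sgn1 (\<not> e) i S = - (sgn1 e i S :: 'k::field)"
  unfolding sgn1_def by (cases e) auto

lemma hmul_gg: assumes "k \<in> Hset n" shows "hmul n hg (hmul n hg k) = k"
proof
  fix d show "hmul n hg (hmul n hg k) d = k d"
    using assms by (cases d) (auto simp: hmul_g hbasis_neg Hset_out)
qed

lemma hmul_gx_eq: assumes i: "i \<in> {1..<n}"
  shows "hmul n (hb (True, {i})) k = hmul n hg (hmul n (hx i) k)"
proof
  fix d show "hmul n (hb (True, {i})) k d = hmul n hg (hmul n (hx i) k) d"
    by (cases d) (auto simp: hmul_g hmul_x[OF i] hmul_gx[OF i] hbasis_neg)
qed

lemma hmul_gx_g: assumes i: "i \<in> {1..<n}"
  shows "hmul n (hb (True, {i})) (hmul n hg k) = (\<lambda>d. - hmul n (hx i) k d)"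
proof
  fix d show "hmul n (hb (True, {i})) (hmul n hg k) d = - hmul n (hx i) k d"
    by (cases d) (auto simp: hmul_g hmul_x[OF i] hmul_gx[OF i] hbasis_neg sgn1_neg hbasis_minus)
qed

lemma hmul_g_x: assumes i: "i \<in> {1..<n}"
  shows "hmul n hg (hx i) = hb (True, {i})"
proof
  fix d show "hmul n hg (hx i) d = hb (True, {i}) d"
    using i by (cases d) (auto simp: hmul_g hx_def hb_def hbasis_def)
qed

lemma hmul_x_one: assumes i: "i \<in> {1..<n}"
  shows "hmul n (hx i) hone = hx i"
proof
  fix d show "hmul n (hx i) hone d = hx i d"
    unfolding hmul_x[OF i] using i by (cases d) (auto simp: hx_def hb_def hbasis_def hone_def sgn1_def ninv_def)
qed

lemma hmul_g_one: "hmul n hg hone = hg"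
proof
  fix d show "hmul n hg hone d = hg d"
    unfolding hmul_g by (cases d) (auto simp: hg_def hb_def hbasis_def hone_def)
qed

lemma hone_Hset: "hone \<in> Hset n" unfolding hone_def by (rule hb_Hset) (simp add: hbasis_def)
lemma hg_Hset: "hg \<in> Hset n" unfolding hg_def by (rule hb_Hset) (simp add: hbasis_def)
lemma hx_Hset: "i \<in> {1..<n} \<Longrightarrow> hx i \<in> Hset n" unfolding hx_def by (rule hb_Hset) (simp add: hbasis_def)
lemma hgx_Hset: "i \<in> {1..<n} \<Longrightarrow> hb (True, {i}) \<in> Hset n" by (rule hb_Hset) (simp add: hbasis_def)
lemma neg_Hset: "k \<in> Hset n \<Longrightarrow> (\<lambda>d. - k d) \<in> Hset n" unfolding Hset_def by auto

lemma hcomul_hb: "b \<in> hbasis n \<Longrightarrow> hcomul n (hb b) p q = dcoef b p q"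
proof -
  assume b: "b \<in> hbasis n"
  have "hcomul n (hb b) p q = (\<Sum>c\<in>hbasis n. if c = b then dcoef c p q else 0)"
    unfolding hcomul_def hb_def by (rule sum.cong) auto
  then show ?thesis using b by (simp add: fin_hbasis)
qed

lemma dcoef_g: "dcoef (True, {}) p q = (if p = (True, {}) \<and> q = (True, {}) then 1 else 0)"
  unfolding dcoef_def by (cases p, cases q) auto

lemma dcoef_x: "dcoef (False, {i}) p q = (if (p = (True, {}) \<and> q = (False, {i})) \<or> (p = (False, {i}) \<and> q = (False, {})) then 1 else 0)"
  unfolding dcoef_def by (cases p, cases q) (auto simp: subset_singleton_iff)

lemma dcoef_gx: "dcoef (True, {i}) p q = (if (p = (False, {}) \<and> q = (True, {i})) \<or> (p = (True, {i}) \<and> q = (True, {})) then 1 else 0)"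
  unfolding dcoef_def by (cases p, cases q) (auto simp: subset_singleton_iff)

lemma dsum1:
  assumes m: "module smult" and fin: "finite B" and p: "p1 \<in> B" "q1 \<in> B"
    and c: "\<And>p q. c p q = (if p = p1 \<and> q = q1 then 1 else 0)"
  shows "(\<Sum>p\<in>B. \<Sum>q\<in>B. smult (c p q) (F p q)) = (F p1 q1 :: 'a::ab_group_add)"
proof -
  have "(\<Sum>p\<in>B. \<Sum>q\<in>B. smult (c p q) (F p q)) =
        (\<Sum>p\<in>B. if p = p1 then (\<Sum>q\<in>B. if q = q1 then F p q else 0) else 0)"
  proof (rule sum.cong, simp)
    fix p assume "p \<in> B"
    have "smult (c p q) (F p q) = (if p = p1 then (if q = q1 then F p q else 0) else 0)" for q
      by (auto simp add: c module.scale_one[OF m] module.scale_zero_left[OF m])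
    then show "(\<Sum>q\<in>B. smult (c p q) (F p q)) = (if p = p1 then (\<Sum>q\<in>B. if q = q1 then F p q else 0) else 0)"
      by simp
  qed
  then show ?thesis using fin p by simp
qed

lemma dsum2:
  assumes m: "module smult" and fin: "finite B" and p: "p1 \<in> B" "q1 \<in> B" "p2 \<in> B" "q2 \<in> B"
    and ne: "(p1, q1) \<noteq> (p2, q2)"
    and c: "\<And>p q. c p q = (if (p = p1 \<and> q = q1) \<or> (p = p2 \<and> q = q2) then 1 else 0)"
  shows "(\<Sum>p\<in>B. \<Sum>q\<in>B. smult (c p q) (F p q)) = (F p1 q1 + F p2 q2 :: 'a::ab_group_add)"
proof -
  have "(\<Sum>p\<in>B. \<Sum>q\<in>B. smult (c p q) (F p q)) =
        (\<Sum>p\<in>B. (if p = p1 then (\<Sum>q\<in>B. if q = q1 then F p q else 0) else 0) +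
                 (if p = p2 then (\<Sum>q\<in>B. if q = q2 then F p q else 0) else 0))"
  proof (rule sum.cong, simp)
    fix p assume "p \<in> B"
    have "smult (c p q) (F p q) = (if p = p1 then (if q = q1 then F p q else 0) else 0) +
                 (if p = p2 then (if q = q2 then F p q else 0) else 0)" for q
      using ne by (auto simp add: c module.scale_one[OF m] module.scale_zero_left[OF m])
    then show "(\<Sum>q\<in>B. smult (c p q) (F p q)) = (if p = p1 then (\<Sum>q\<in>B. if q = q1 then F p q else 0) else 0) +
                 (if p = p2 then (\<Sum>q\<in>B. if q = q2 then F p q else 0) else 0)"
      by (simp add: sum.distrib)
  qed
  also have "\<dots> = F p1 q1 + F p2 q2" using fin p by (simp add: sum.distrib)
  finally show ?thesis .
qed

lemma xprod_Hset: "xprod n L \<in> Hset n"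
  by (cases L) (auto simp: xprod_def hone_Hset hmul_Hset)

lemma xprod_Cons: "xprod n (i # L) = hmul n (hx i) (xprod n L)"
  by (simp add: xprod_def)

theorem proposition4p3:
  fixes n :: nat
    and smult :: "'k::field \<Rightarrow> 'a::ring_1 \<Rightarrow> 'a"
    and act :: "'k hel \<Rightarrow> 'a \<Rightarrow> 'a"
  assumes char: "(2::'k) \<noteq> 0"
    and n2: "n \<ge> 2"
    and alg: "k_algebra smult"
    and pa: "partial_action n smult act"
    and g1: "act hg 1 = 0"
    and central: "\<forall>i\<in>{1..<n}. \<forall>b. act (hx i) 1 * b = b * act (hx i) 1"
  shows "(\<forall>a. \<forall>i\<in>{1..<n}.
            act (hmul n hg (hx i)) a = act (hx i) a \<and> act (hx i) a = act (hx i) 1 * a) \<and>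
         (\<forall>a. \<forall>is. length is \<ge> 2 \<longrightarrow> set is \<subseteq> {1..<n} \<longrightarrow>
            act (hmul n hg (xprod n is)) a = act (xprod n is) a \<and> act (xprod n is) a = 0)"
proof -
  have m: "module smult" using alg unfolding k_algebra_def by blast
  have sc: "\<And>(h::'k hel) c a. h \<in> Hset n \<Longrightarrow> act (\<lambda>d. c * h d) a = smult c (act h a)"
    using pa unfolding partial_action_def by blast
  have one: "\<And>a. act hone a = a"
    using pa unfolding partial_action_def by blast
  have mul: "\<And>h a b. h \<in> Hset n \<Longrightarrow> act h (a * b) =
        (\<Sum>p\<in>hbasis n. \<Sum>q\<in>hbasis n. smult (hcomul n h p q) (act (hb p) a * act (hb q) b))"
    using pa unfolding partial_action_def by blast
  have comp: "\<And>h k a. h \<in> Hset n \<Longrightarrow> k \<in> Hset n \<Longrightarrow> act h (act k a) =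
        (\<Sum>p\<in>hbasis n. \<Sum>q\<in>hbasis n.
           smult (hcomul n h p q) (act (hb p) 1 * act (hmul n (hb q) k) a))"
    using pa unfolding partial_action_def by blast
  have neg: "\<And>(h::'k hel) a. h \<in> Hset n \<Longrightarrow> act (\<lambda>d. - h d) a = - act h a"
  proof -
    fix h :: "'k hel" and a assume h: "h \<in> Hset n"
    have "act (\<lambda>d. - h d) a = act (\<lambda>d. (- 1) * h d) a" by simp
    also have "\<dots> = smult (- 1) (act h a)" using sc[OF h] .
    also have "\<dots> = - act h a" by (simp add: module.scale_minus_left[OF m] module.scale_one[OF m])
    finally show "act (\<lambda>d. - h d) a = - act h a" .
  qed
  have bg: "(True, {}) \<in> hbasis n" and b1: "(False, {}) \<in> hbasis n" by (auto simp: hbasis_def)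
  have fin: "finite (hbasis n)" by (rule fin_hbasis)
  have g0: "\<And>b. act hg b = 0"
  proof -
    fix b
    have "act hg (1 * b) = act hg 1 * act hg b"
      unfolding mul[OF hg_Hset] unfolding hg_def hcomul_hb[OF bg]
      by (rule dsum1[OF m fin bg bg, where c="dcoef (True, {})" and F="\<lambda>p q. act (hb p) 1 * act (hb q) b"]) (rule dcoef_g)
    then show "act hg b = 0" using g1 by simp
  qed
  have part1: "\<And>i. i \<in> {1..<n} \<Longrightarrow> (\<forall>a. act (hx i) a = act (hx i) 1 * a) \<and>
      (\<forall>a. act (hb (True, {i})) a = act (hx i) a) \<and>
      (\<forall>y\<in>Hset n. (\<forall>a. act (hmul n hg y) a = act y a) \<longrightarrow>
          (\<forall>a. act (hmul n (hx i) y) a = 0 \<and> act (hmul n hg (hmul n (hx i) y)) a = 0))"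
  proof -
    fix i assume i: "i \<in> {1..<n}"
    define X where "X = act (hx i) 1"
    define G where "G = act (hb (True, {i})) 1"
    have bx: "(False, {i}) \<in> hbasis n" and bgx: "(True, {i}) \<in> hbasis n" and bx': "(True, {}) \<in> hbasis n"
      using i by (auto simp: hbasis_def)
    have ne1: "((True, {}), (False, {i})) \<noteq> ((False, {i}), (False, {}))" by simp
    have ne2: "((False, {}), (True, {i})) \<noteq> ((True, {i}), (True, {}))" by simp
    have S2: "act (hx i) b = X * b" for b
    proof -
      have "act (hx i) (1 * b) = act (hb (True, {})) 1 * act (hb (False, {i})) b + act (hb (False, {i})) 1 * act (hb (False, {})) b"
        unfolding mul[OF hx_Hset[OF i]] unfolding hx_def hcomul_hb[OF bx]
        by (rule dsum2[OF m fin bg bx bx b1 ne1, where c="dcoef (False, {i})" and F="\<lambda>p q. act (hb p) 1 * act (hb q) b"]) (rule dcoef_x)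
      then show ?thesis using g0 one unfolding X_def hg_def[symmetric] hx_def[symmetric] hone_def[symmetric] by simp
    qed
    have S3: "act (hb (True, {i})) a = a * G" for a
    proof -
      have "act (hb (True, {i})) (a * 1) = act (hb (False, {})) a * act (hb (True, {i})) 1 + act (hb (True, {i})) a * act (hb (True, {})) 1"
        unfolding mul[OF hgx_Hset[OF i]] unfolding hcomul_hb[OF bgx]
        by (rule dsum2[OF m fin b1 bgx bgx bg ne2, where c="dcoef (True, {i})" and F="\<lambda>p q. act (hb p) a * act (hb q) 1"]) (rule dcoef_gx)
      then show ?thesis using g1 one unfolding G_def hg_def[symmetric] hone_def[symmetric] by simp
    qed
    have S4: "act (hb (True, {i})) (act k a) = act (hmul n (hb (True, {i})) k) a + G * act (hmul n hg k) a"
      if k: "k \<in> Hset n" for k a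
    proof -
      have "act (hb (True, {i})) (act k a) = act (hb (False, {})) 1 * act (hmul n (hb (True, {i})) k) a + act (hb (True, {i})) 1 * act (hmul n (hb (True, {})) k) a"
        unfolding comp[OF hgx_Hset[OF i] k] unfolding hcomul_hb[OF bgx]
        by (rule dsum2[OF m fin b1 bgx bgx bg ne2, where c="dcoef (True, {i})" and F="\<lambda>p q. act (hb p) 1 * act (hmul n (hb q) k) a"]) (rule dcoef_gx)
      then show ?thesis using one unfolding G_def hg_def[symmetric] hone_def[symmetric] by simp
    qed
    have XG: "X = G"
    proof -
      have "act (hb (True, {i})) (act (hmul n hg hone) 1) = act (hmul n (hb (True, {i})) (hmul n hg hone)) 1 + G * act (hmul n hg (hmul n hg hone)) 1"
        by (rule S4[OF hmul_Hset])
      then have "0 = - act (hx i) 1 + G"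
        unfolding hmul_gx_g[OF i] hmul_gg[OF hone_Hset] unfolding neg[OF hmul_Hset] hmul_x_one[OF i] hmul_g_one neg[OF hx_Hset[OF i]]
        using g0 S3 one by simp
      then show ?thesis unfolding X_def by (simp add: algebra_simps)
    qed
    have cX: "X * b = b * X" for b using central i unfolding X_def by blast
    show "(\<forall>a. act (hx i) a = act (hx i) 1 * a) \<and>
      (\<forall>a. act (hb (True, {i})) a = act (hx i) a) \<and>
      (\<forall>y\<in>Hset n. (\<forall>a. act (hmul n hg y) a = act y a) \<longrightarrow>
          (\<forall>a. act (hmul n (hx i) y) a = 0 \<and> act (hmul n hg (hmul n (hx i) y)) a = 0))"
    proof (intro conjI allI ballI impI)
      fix a
      have X1: "act (hx i) 1 = X" using S2[of 1] by simp
      show "act (hx i) a = act (hx i) 1 * a" unfolding X1 by (rule S2)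
    next
      fix a
      have "act (hb (True, {i})) a = a * X" using S3 XG by simp
      also have "\<dots> = X * a" by (rule cX[symmetric])
      also have "\<dots> = act (hx i) a" by (rule S2[symmetric])
      finally show "act (hb (True, {i})) a = act (hx i) a" .
    next
      fix y a assume y: "y \<in> Hset n" and IH: "\<forall>a. act (hmul n hg y) a = act y a"
      have e1: "act (hmul n hg y) a * G = - act (hmul n (hx i) y) a + G * act y a"
        using S4[OF hmul_Hset, of hg y a] S3
        unfolding hmul_gx_g[OF i] neg[OF hmul_Hset] hmul_gg[OF y] by simp
      then have "act y a * X = - act (hmul n (hx i) y) a + X * act y a" using IH XG by simp
      moreover have "X * act y a = act y a * X" by (rule cX)
      ultimately show "act (hmul n (hx i) y) a = 0" by simp
      have e2: "act y a * G = act (hmul n (hb (True, {i})) y) a + G * act (hmul n hg y) a"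
        using S4[OF y, of a] S3 by simp
      then have "act y a * X = act (hmul n hg (hmul n (hx i) y)) a + X * act y a" using IH XG
        unfolding hmul_gx_eq[OF i] by simp
      moreover have "X * act y a = act y a * X" by (rule cX)
      ultimately show "act (hmul n hg (hmul n (hx i) y)) a = 0" by simp
    qed
  qed
  have ind: "set L \<subseteq> {1..<n} \<Longrightarrow> L \<noteq> [] \<Longrightarrow> (\<forall>a. act (hmul n hg (xprod n L)) a = act (xprod n L) a) \<and>
      (length L \<ge> 2 \<longrightarrow> (\<forall>a. act (xprod n L) a = 0))" for L
  proof (induction L)
    case Nil then show ?case by simp
  next
    case (Cons i L)
    then have i: "i \<in> {1..<n}" by simp
    show ?case
    proof (cases "L = []")
      case True
      have P2: "\<forall>a. act (hb (True, {i})) a = act (hx i) a" using part1[OF i] by blast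
      have xi: "xprod n [i] = hx i" by (simp add: xprod_def hmul_x_one[OF i])
      show ?thesis using P2 unfolding True xi hmul_g_x[OF i] by simp
    next
      case False
      then have IH: "\<forall>a. act (hmul n hg (xprod n L)) a = act (xprod n L) a" using Cons by simp
      have P3: "\<forall>y\<in>Hset n. (\<forall>a. act (hmul n hg y) a = act y a) \<longrightarrow>
          (\<forall>a. act (hmul n (hx i) y) a = 0 \<and> act (hmul n hg (hmul n (hx i) y)) a = 0)"
        using part1[OF i] by blast
      have Z: "\<forall>a. act (hmul n (hx i) (xprod n L)) a = 0 \<and> act (hmul n hg (hmul n (hx i) (xprod n L))) a = 0"
        using P3 xprod_Hset[of n L] IH by blast
      show ?thesis unfolding xprod_Cons using Z by simp
    qed
  qed
  show ?thesis
  proof (intro conjI allI ballI impI)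
    fix a i assume i: "i \<in> {1..<n}"
    show "act (hmul n hg (hx i)) a = act (hx i) a" using part1[OF i] unfolding hmul_g_x[OF i] by blast
    show "act (hx i) a = act (hx i) 1 * a" using part1[OF i] by blast
  next
    fix a and L :: "nat list" assume "2 \<le> length L" "set L \<subseteq> {1..<n}"
    moreover then have "L \<noteq> []" by auto
    ultimately show "act (hmul n hg (xprod n L)) a = act (xprod n L) a" "act (xprod n L) a = 0"
      using ind[of L] by auto
  qed
qed

end
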